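(* Let $S$ be a scheme on $X$, $\mathbb F$ a field, $x\in X$, $E_a^*=E_a^*(x)$. Let $a\ge 0$ be an integer and $R_{i_b},R_{j_b},R_{\ell_b}\in S$ for $b=0,\dots,a$. Suppose $p_{i_bj_b}^{\ell_b}=1$ and $k_{i_b}=k_{\ell_b}=2$ for all $b\in\{0,\dots,a\}$, and $\ell_c=i_{c+1}$ for all $c\in\{0,\dots,a-1\}$. Write $xR_{i_0}=\{u_1,u_2\}$ and $xR_{\ell_a}=\{v_1,v_2\}$. Then the product $E_{i_0}^*A_{j_0}E_{\ell_0}^*E_{i_1}^*A_{j_1}E_{\ell_1}^*\cdots E_{i_a}^*A_{j_a}E_{\ell_a}^*$ equals either $E_{u_1v_1}+E_{u_2v_2}$ or $E_{u_1v_2}+E_{u_2v_1}$.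
   Context: Let $X$ be a nonempty finite set. A scheme of class $d$ on $X$ is a partition $S=\{R_0,\dots,R_d\}$ of $X\times X$ into nonempty sets such that $R_0=\{(b,b):b\in X\}$; for each $c$ there is $c'$ with $R_{c'}=\{(f,e):(e,f)\in R_c\}$; and for all $i,j,k$ the intersection number $p_{ij}^k=|\{\ell\in X:(m,\ell)\in R_i,(\ell,n)\in R_j\}|$ does not depend on $(m,n)\in R_k$. The valency is $k_a=p_{aa'}^0$. For $y\in X$, $yR_a=\{z:(y,z)\in R_a\}$. $A_a\in M_X(\mathbb F)$ is the $(0,1)$ adjacency matrix of $R_a$, $E_a^*(y)$ is the diagonal $(0,1)$-matrix with ones exactly at positions indexed by $yR_a$, and $E_{uv}$ is the matrix unit with a single $1$ at position $(u,v)$. *)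

theory Defs
  imports Main
begin

definition scheme :: "'x set \<Rightarrow> nat \<Rightarrow> (nat \<Rightarrow> ('x \<times> 'x) set) \<Rightarrow> bool" where
  "scheme X d R \<longleftrightarrow>
     finite X \<and> X \<noteq> {} \<and>
     (\<forall>c\<le>d. R c \<noteq> {} \<and> R c \<subseteq> X \<times> X) \<and>
     (\<forall>c\<le>d. \<forall>c'\<le>d. c \<noteq> c' \<longrightarrow> R c \<inter> R c' = {}) \<and>
     (\<Union>c\<in>{..d}. R c) = X \<times> X \<and>
     R 0 = Id_on X \<and>
     (\<forall>c\<le>d. \<exists>c'\<le>d. R c' = (R c)\<inverse>) \<and>
     (\<forall>i\<le>d. \<forall>j\<le>d. \<forall>k\<le>d. \<exists>p. \<forall>(m,n)\<in>R k.
        card {l\<in>X. (m,l) \<in> R i \<and> (l,n) \<in> R j} = p)"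

text \<open>Intersection number p_ij^k (evaluated at some pair of R k; well-defined for schemes).\<close>
definition int_num :: "'x set \<Rightarrow> (nat \<Rightarrow> ('x \<times> 'x) set) \<Rightarrow> nat \<Rightarrow> nat \<Rightarrow> nat \<Rightarrow> nat" where
  "int_num X R i j k = (let (m,n) = (SOME mn. mn \<in> R k) in
     card {l\<in>X. (m,l) \<in> R i \<and> (l,n) \<in> R j})"

definition conv_idx :: "nat \<Rightarrow> (nat \<Rightarrow> ('x \<times> 'x) set) \<Rightarrow> nat \<Rightarrow> nat" where
  "conv_idx d R c = (THE c'. c' \<le> d \<and> R c' = (R c)\<inverse>)"

definition valency :: "'x set \<Rightarrow> nat \<Rightarrow> (nat \<Rightarrow> ('x \<times> 'x) set) \<Rightarrow> nat \<Rightarrow> nat" where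
  "valency X d R a = int_num X R a (conv_idx d R a) 0"

text \<open>Matrices in M_X(F) are functions 'x => 'x => 'a (zero outside X x X).\<close>
definition mmul :: "'x set \<Rightarrow> ('x \<Rightarrow> 'x \<Rightarrow> 'a::field) \<Rightarrow> ('x \<Rightarrow> 'x \<Rightarrow> 'a) \<Rightarrow> ('x \<Rightarrow> 'x \<Rightarrow> 'a)" where
  "mmul X A B = (\<lambda>u v. \<Sum>w\<in>X. A u w * B w v)"

definition adj :: "(nat \<Rightarrow> ('x \<times> 'x) set) \<Rightarrow> nat \<Rightarrow> ('x \<Rightarrow> 'x \<Rightarrow> 'a::field)" where
  "adj R a = (\<lambda>u v. if (u,v) \<in> R a then 1 else 0)"

definition dual_idem :: "(nat \<Rightarrow> ('x \<times> 'x) set) \<Rightarrow> 'x \<Rightarrow> nat \<Rightarrow> ('x \<Rightarrow> 'x \<Rightarrow> 'a::field)" where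
  "dual_idem R y a = (\<lambda>u v. if u = v \<and> (y,u) \<in> R a then 1 else 0)"

definition munit :: "'x \<Rightarrow> 'x \<Rightarrow> ('x \<Rightarrow> 'x \<Rightarrow> 'a::field)" where
  "munit u v = (\<lambda>p q. if p = u \<and> q = v then 1 else 0)"

fun chain_prod :: "'x set \<Rightarrow> (nat \<Rightarrow> ('x \<times> 'x) set) \<Rightarrow> 'x \<Rightarrow> (nat \<Rightarrow> nat) \<Rightarrow> (nat \<Rightarrow> nat)
     \<Rightarrow> (nat \<Rightarrow> nat) \<Rightarrow> nat \<Rightarrow> ('x \<Rightarrow> 'x \<Rightarrow> 'a::field)" where
  "chain_prod X R x i j l 0 =
     mmul X (mmul X (dual_idem R x (i 0)) (adj R (j 0))) (dual_idem R x (l 0))"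
| "chain_prod X R x i j l (Suc b) =
     mmul X (chain_prod X R x i j l b)
       (mmul X (mmul X (dual_idem R x (i (Suc b))) (adj R (j (Suc b)))) (dual_idem R x (l (Suc b))))"

end

theory Submission
  imports Defs
begin

definition matr :: "'x set \<Rightarrow> 'x set \<Rightarrow> ('x \<Rightarrow> 'x \<Rightarrow> bool) \<Rightarrow> ('x \<Rightarrow> 'x \<Rightarrow> 'a::field)" where
  "matr A B r = (\<lambda>p q. if p \<in> A \<and> q \<in> B \<and> r p q then 1 else 0)"

definition good :: "'x set \<Rightarrow> 'x set \<Rightarrow> ('x \<Rightarrow> 'x \<Rightarrow> bool) \<Rightarrow> bool" where
  "good A B r \<longleftrightarrow> (\<forall>p\<in>A. \<exists>!q. q \<in> B \<and> r p q) \<and> (\<forall>q\<in>B. \<exists>!p. p \<in> A \<and> r p q)"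

lemma mmul_diag_left:
  assumes fin: "finite X" shows
  "mmul X (dual_idem R x c) M = (\<lambda>p q. if (x,p)\<in>R c \<and> p\<in>X then M p q else (0::'a::field))"
proof (rule ext, rule ext)
  fix p q
  have "(\<Sum>v\<in>X. dual_idem R x c p v * M v q) = (\<Sum>v\<in>X. if v = p then (if (x,p)\<in>R c then M p q else 0) else 0)"
    by (rule sum.cong) (auto simp: dual_idem_def)
  then show "mmul X (dual_idem R x c) M p q = (if (x,p)\<in>R c \<and> p\<in>X then M p q else 0)"
    using fin by (simp add: mmul_def)
qed

lemma mmul_diag_right:
  assumes fin: "finite X" shows
  "mmul X M (dual_idem R x c) = (\<lambda>p q. if (x,q)\<in>R c \<and> q\<in>X then M p q else (0::'a::field))"
proof (rule ext, rule ext)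
  fix p q
  have "(\<Sum>v\<in>X. M p v * dual_idem R x c v q) = (\<Sum>v\<in>X. if v = q then (if (x,q)\<in>R c then M p q else 0) else 0)"
    by (rule sum.cong) (auto simp: dual_idem_def)
  then show "mmul X M (dual_idem R x c) p q = (if (x,q)\<in>R c \<and> q\<in>X then M p q else 0)"
    using fin by (simp add: mmul_def)
qed

lemmas sch = scheme_def[THEN iffD1]
lemma sch_fin: "scheme X d R \<Longrightarrow> finite X" using sch by blast
lemma sch_ne: "scheme X d R \<Longrightarrow> c \<le> d \<Longrightarrow> R c \<noteq> {}" using sch[THEN conjunct2, THEN conjunct2, THEN conjunct1] by blast
lemma scheme_sub: "scheme X d R \<Longrightarrow> c \<le> d \<Longrightarrow> R c \<subseteq> X \<times> X" using sch[THEN conjunct2, THEN conjunct2, THEN conjunct1] by blast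
lemma sch_disj: "scheme X d R \<Longrightarrow> c \<le> d \<Longrightarrow> c' \<le> d \<Longrightarrow> c \<noteq> c' \<Longrightarrow> R c \<inter> R c' = {}"
  using sch[THEN conjunct2, THEN conjunct2, THEN conjunct2, THEN conjunct1] by blast
lemma sch_R0: "scheme X d R \<Longrightarrow> R 0 = Id_on X"
  using sch[THEN conjunct2, THEN conjunct2, THEN conjunct2, THEN conjunct2, THEN conjunct2, THEN conjunct1] by blast
lemma conv_exists: "scheme X d R \<Longrightarrow> c \<le> d \<Longrightarrow> \<exists>c'\<le>d. R c' = (R c)\<inverse>"
  using sch[THEN conjunct2, THEN conjunct2, THEN conjunct2, THEN conjunct2, THEN conjunct2, THEN conjunct2, THEN conjunct1] by blast
lemma sch_reg: "scheme X d R \<Longrightarrow> i \<le> d \<Longrightarrow> j \<le> d \<Longrightarrow> k \<le> d \<Longrightarrow> \<exists>p. \<forall>(m,n)\<in>R k.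
        card {l\<in>X. (m,l) \<in> R i \<and> (l,n) \<in> R j} = p"
  using sch[THEN conjunct2, THEN conjunct2, THEN conjunct2, THEN conjunct2, THEN conjunct2, THEN conjunct2, THEN conjunct2] by blast


lemma int_num_at:
  assumes S: "scheme X d R" and "i \<le> d" "j \<le> d" "k \<le> d" and mn: "(m,n) \<in> R k"
  shows "card {z\<in>X. (m,z)\<in>R i \<and> (z,n)\<in>R j} = int_num X R i j k"
proof -
  obtain c where c: "\<forall>(m,n)\<in>R k. card {l\<in>X. (m,l) \<in> R i \<and> (l,n) \<in> R j} = c"
    using sch_reg[OF S assms(2-4)] by blast
  have "(SOME mn. mn \<in> R k) \<in> R k" using mn by (rule someI)
  then obtain m' n' where e: "(SOME mn. mn \<in> R k) = (m',n')" and "(m',n') \<in> R k"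
    by (metis prod.exhaust)
  then have "int_num X R i j k = c" using c by (auto simp: int_num_def)
  then show ?thesis using c mn by auto
qed


lemma conv_idx_eq:
  assumes S: "scheme X d R" and "c \<le> d" and "c' \<le> d" and "R c' = (R c)\<inverse>"
  shows "conv_idx d R c = c'"
  unfolding conv_idx_def
proof (rule the_equality)
  show "c' \<le> d \<and> R c' = (R c)\<inverse>" using assms by blast
next
  fix c'' assume h: "c'' \<le> d \<and> R c'' = (R c)\<inverse>"
  have ne: "R c \<noteq> {}" using sch_ne[OF S assms(2)] .
  show "c'' = c'"
  proof (rule ccontr)
    assume "c'' \<noteq> c'"
    then have "R c'' \<inter> R c' = {}" using sch_disj[OF S] h assms by blast
    then show False using h assms ne by auto
  qed
qed

lemma valency_card:
  assumes S: "scheme X d R" and "c \<le> d" and y: "y \<in> X"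
  shows "card {z. (y,z)\<in>R c} = valency X d R c"
proof -
  obtain c' where c': "c' \<le> d" "R c' = (R c)\<inverse>" using conv_exists[OF S assms(2)] by blast
  have ci: "conv_idx d R c = c'" using conv_idx_eq[OF S assms(2) c'] .
  have R0: "R 0 = Id_on X" using sch_R0[OF S] .
  have "(y,y) \<in> R 0" using R0 y by auto
  then have "card {z\<in>X. (y,z)\<in>R c \<and> (z,y)\<in>R c'} = int_num X R c c' 0"
    using int_num_at[OF S assms(2) c'(1)] by simp
  moreover have "{z\<in>X. (y,z)\<in>R c \<and> (z,y)\<in>R c'} = {z. (y,z)\<in>R c}"
    using scheme_sub[OF S assms(2)] c' by auto
  ultimately show ?thesis by (simp add: valency_def ci)
qed


lemma block_good:
  assumes S: "scheme X d R" and x: "x \<in> X" and d: "i \<le> d" "j \<le> d" "l \<le> d"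
    and p1: "int_num X R i j l = 1"
    and cA: "card {z. (x,z)\<in>R i} = 2" and cB: "card {z. (x,z)\<in>R l} = 2"
  shows "good {z. (x,z)\<in>R i} {z. (x,z)\<in>R l} (\<lambda>p q. (p,q) \<in> R j)"
proof -
  define A where "A = {z. (x,z)\<in>R i}"
  define B where "B = {z. (x,z)\<in>R l}"
  have subi: "R i \<subseteq> X \<times> X" using scheme_sub[OF S d(1)] .
  have subj: "R j \<subseteq> X \<times> X" using scheme_sub[OF S d(2)] .
  have subl: "R l \<subseteq> X \<times> X" using scheme_sub[OF S d(3)] .
  have col: "\<exists>!p. p \<in> A \<and> (p,q) \<in> R j" if q: "q \<in> B" for q
  proof -
    have "card {z\<in>X. (x,z)\<in>R i \<and> (z,q)\<in>R j} = 1"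
      using int_num_at[OF S d, of x q] q p1 by (simp add: B_def)
    then obtain p0 where e: "{z\<in>X. (x,z)\<in>R i \<and> (z,q)\<in>R j} = {p0}"
      by (rule card_1_singletonE)
    have "p0 \<in> {z\<in>X. (x,z)\<in>R i \<and> (z,q)\<in>R j}" by (subst e) simp
    then have h1: "p0 \<in> A \<and> (p0,q) \<in> R j" by (simp add: A_def)
    have h2: "p = p0" if "p \<in> A" "(p,q) \<in> R j" for p
    proof -
      have "p \<in> X" using that subi by (auto simp: A_def)
      then have "p \<in> {z\<in>X. (x,z)\<in>R i \<and> (z,q)\<in>R j}" using that by (simp add: A_def)
      then show ?thesis using e by simp
    qed
    show ?thesis using h1 h2 by blast
  qed
  obtain j' where j': "j' \<le> d" "R j' = (R j)\<inverse>" using conv_exists[OF S d(2)] by blast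
  define c where "c = int_num X R l j' i"
  have rowc: "card {q\<in>B. (p,q) \<in> R j} = c" if p: "p \<in> A" for p
  proof -
    have "card {z\<in>X. (x,z)\<in>R l \<and> (z,p)\<in>R j'} = c"
      using int_num_at[OF S d(3) j'(1) d(1), of x p] p by (simp add: A_def c_def)
    moreover have "{z\<in>X. (x,z)\<in>R l \<and> (z,p)\<in>R j'} = {q\<in>B. (p,q) \<in> R j}"
      using subl j' by (auto simp: B_def)
    ultimately show ?thesis by simp
  qed
  have cB': "card B = 2" using cB by (simp add: B_def)
  have cA': "card A = 2" using cA by (simp add: A_def)
  have finB: "finite B" using cB' by (rule_tac ccontr) simp
  obtain b1 b2 where bb: "B = {b1,b2}" using cB' unfolding card_2_iff by blast
  obtain v where v: "v \<in> B" using bb by blast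
  obtain p0 where p0: "p0 \<in> A" "(p0,v) \<in> R j" using col[OF v] by blast
  have "c \<ge> 1"
  proof -
    have "{q\<in>B. (p0,q) \<in> R j} \<noteq> {}" using v p0 by blast
    then have "card {q\<in>B. (p0,q) \<in> R j} \<noteq> 0" using finB by simp
    then show ?thesis using rowc[OF p0(1)] by simp
  qed
  moreover have "\<not> c \<ge> 2"
  proof
    assume c2: "c \<ge> 2"
    obtain a1 a2 where a: "A = {a1,a2}" "a1 \<noteq> a2" using cA' unfolding card_2_iff by blast
    have full: "{q\<in>B. (p,q) \<in> R j} = B" if "p \<in> A" for p
    proof -
      have s: "{q\<in>B. (p,q) \<in> R j} \<subseteq> B" by blast
      have "card {q\<in>B. (p,q) \<in> R j} \<le> card B" using card_mono[OF finB s] .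
      then have "card {q\<in>B. (p,q) \<in> R j} = card B" using rowc[OF that] c2 cB' by simp
      then show ?thesis using card_subset_eq[OF finB s] by simp
    qed
    have "(a1,v) \<in> R j" "(a2,v) \<in> R j" using full[of a1] full[of a2] a v by blast+
    then show False using col[OF v] a by blast
  qed
  ultimately have c1: "c = 1" by simp
  have row: "\<exists>!q. q \<in> B \<and> (p,q) \<in> R j" if p: "p \<in> A" for p
  proof -
    have "card {q\<in>B. (p,q) \<in> R j} = 1" using rowc[OF p] c1 by simp
    then obtain q0 where e: "{q\<in>B. (p,q) \<in> R j} = {q0}"
      by (rule card_1_singletonE)
    have "q0 \<in> {q\<in>B. (p,q) \<in> R j}" by (subst e) simp
    then have h1: "q0 \<in> B \<and> (p,q0) \<in> R j" by simp
    have h2: "q = q0" if "q \<in> B" "(p,q) \<in> R j" for q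
    proof -
      have "q \<in> {q\<in>B. (p,q) \<in> R j}" using that by simp
      then show ?thesis using e by simp
    qed
    show ?thesis using h1 h2 by blast
  qed
  show ?thesis using row col unfolding good_def A_def B_def by blast
qed

lemma block_matr:
  assumes S: "scheme X d R" and d: "i \<le> d" "j \<le> d" "l \<le> d"
  shows "mmul X (mmul X (dual_idem R x i) (adj R j)) (dual_idem R x l)
     = (matr {z. (x,z)\<in>R i} {z. (x,z)\<in>R l} (\<lambda>p q. (p,q) \<in> R j) :: 'x \<Rightarrow> 'x \<Rightarrow> 'a::field)"
  using scheme_sub[OF S d(1)] scheme_sub[OF S d(3)] sch_fin[OF S]
  by (auto simp: mmul_diag_left mmul_diag_right matr_def adj_def fun_eq_iff)

lemma good_comp:
  assumes "good A B r" "good B C s"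
  shows "good A C (\<lambda>p q. \<exists>w\<in>B. r p w \<and> s w q)"
proof -
  have r1: "\<forall>p\<in>A. \<exists>!q. q \<in> B \<and> r p q" and r2: "\<forall>q\<in>B. \<exists>!p. p \<in> A \<and> r p q"
    using assms(1) unfolding good_def by auto
  have s1: "\<forall>p\<in>B. \<exists>!q. q \<in> C \<and> s p q" and s2: "\<forall>q\<in>C. \<exists>!p. p \<in> B \<and> s p q"
    using assms(2) unfolding good_def by auto
  have A1: "\<exists>!q. q \<in> C \<and> (\<exists>w\<in>B. r p w \<and> s w q)" if p: "p \<in> A" for p
  proof -
    obtain w where w: "w \<in> B" "r p w" and wu: "\<And>w'. w' \<in> B \<Longrightarrow> r p w' \<Longrightarrow> w' = w"
      using r1 p by (metis)
    obtain q where q: "q \<in> C" "s w q" and qu: "\<And>q'. q' \<in> C \<Longrightarrow> s w q' \<Longrightarrow> q' = q"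
      using s1 w(1) by (metis)
    show ?thesis
    proof (rule ex1I[of _ q])
      show "q \<in> C \<and> (\<exists>w\<in>B. r p w \<and> s w q)" using q w by blast
    next
      fix q' assume "q' \<in> C \<and> (\<exists>w\<in>B. r p w \<and> s w q')"
      then obtain w' where "q' \<in> C" "w' \<in> B" "r p w'" "s w' q'" by blast
      then show "q' = q" using wu qu by blast
    qed
  qed
  have A2: "\<exists>!p. p \<in> A \<and> (\<exists>w\<in>B. r p w \<and> s w q)" if q: "q \<in> C" for q
  proof -
    obtain w where w: "w \<in> B" "s w q" and wu: "\<And>w'. w' \<in> B \<Longrightarrow> s w' q \<Longrightarrow> w' = w"
      using s2 q by (metis)
    obtain p where p: "p \<in> A" "r p w" and pu: "\<And>p'. p' \<in> A \<Longrightarrow> r p' w \<Longrightarrow> p' = p"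
      using r2 w(1) by (metis)
    show ?thesis
    proof (rule ex1I[of _ p])
      show "p \<in> A \<and> (\<exists>w\<in>B. r p w \<and> s w q)" using p w by blast
    next
      fix p' assume "p' \<in> A \<and> (\<exists>w\<in>B. r p' w \<and> s w q)"
      then obtain w' where "p' \<in> A" "w' \<in> B" "r p' w'" "s w' q" by blast
      then show "p' = p" using wu pu by blast
    qed
  qed
  show ?thesis using A1 A2 unfolding good_def by blast
qed

lemma matr_comp:
  assumes g: "good A B r" and sub: "B \<subseteq> X" and fin: "finite X"
  shows "mmul X (matr A B r) (matr B C s) = (matr A C (\<lambda>p q. \<exists>w\<in>B. r p w \<and> s w q) :: 'x \<Rightarrow> 'x \<Rightarrow> 'a::field)"
proof (rule ext, rule ext)
  fix p q
  show "mmul X (matr A B r) (matr B C s) p q = (matr A C (\<lambda>p q. \<exists>w\<in>B. r p w \<and> s w q) :: 'x \<Rightarrow> 'x \<Rightarrow> 'a) p q"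
  proof (cases "p \<in> A")
    case True
    have ex: "\<exists>!w. w \<in> B \<and> r p w" using g True unfolding good_def by blast
    obtain w0 where w0: "w0 \<in> B" "r p w0" "\<And>w. w \<in> B \<Longrightarrow> r p w \<Longrightarrow> w = w0"
      using ex by (elim ex1E) blast
    have "(\<Sum>w\<in>X. (matr A B r p w :: 'a) * matr B C s w q) = (\<Sum>w\<in>X. if w = w0 then (if q \<in> C \<and> s w0 q then 1 else 0) else 0)"
    proof (rule sum.cong[OF refl])
      fix w assume "w \<in> X"
      show "(matr A B r p w :: 'a) * matr B C s w q = (if w = w0 then (if q \<in> C \<and> s w0 q then 1 else 0) else 0)"
      proof (cases "w = w0")
        case T: True
        then show ?thesis using w0(1,2) True by (simp add: matr_def)
      next
        case F: False
        then have "\<not> (w \<in> B \<and> r p w)" using w0(3) by blast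
        then show ?thesis using F by (simp add: matr_def)
      qed
    qed
    also have "\<dots> = (if q \<in> C \<and> s w0 q then 1 else 0)"
      using fin sub w0(1) by (simp add: subset_iff)
    finally have L: "mmul X (matr A B r) (matr B C s) p q = (if q \<in> C \<and> s w0 q then 1 else (0::'a))"
      by (simp add: mmul_def)
    have "(\<exists>w\<in>B. r p w \<and> s w q) \<longleftrightarrow> s w0 q" using w0 by blast
    then show ?thesis using L True by (simp add: matr_def)
  next
    case False
    then show ?thesis by (simp add: mmul_def matr_def)
  qed
qed

lemma matr_form1:
  assumes u: "u1 \<noteq> u2" and v: "v1 \<noteq> v2"
    and h: "r u1 v1" "\<not> r u1 v2" "r u2 v2" "\<not> r u2 v1"
  shows "(matr {u1,u2} {v1,v2} r :: 'x \<Rightarrow> 'x \<Rightarrow> 'a::field) = (\<lambda>p q. munit u1 v1 p q + munit u2 v2 p q)"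
proof (intro ext)
  fix p q
  show "(matr {u1,u2} {v1,v2} r :: 'x \<Rightarrow> 'x \<Rightarrow> 'a::field) p q = munit u1 v1 p q + munit u2 v2 p q"
    unfolding matr_def munit_def
    apply (cases "p = u1"; cases "p = u2"; cases "q = v1"; cases "q = v2")
    using u v h by simp_all
qed

lemma matr_form2:
  assumes u: "u1 \<noteq> u2" and v: "v1 \<noteq> v2"
    and h: "\<not> r u1 v1" "r u1 v2" "\<not> r u2 v2" "r u2 v1"
  shows "(matr {u1,u2} {v1,v2} r :: 'x \<Rightarrow> 'x \<Rightarrow> 'a::field) = (\<lambda>p q. munit u1 v2 p q + munit u2 v1 p q)"
proof (intro ext)
  fix p q
  show "(matr {u1,u2} {v1,v2} r :: 'x \<Rightarrow> 'x \<Rightarrow> 'a::field) p q = munit u1 v2 p q + munit u2 v1 p q"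
    unfolding matr_def munit_def
    apply (cases "p = u1"; cases "p = u2"; cases "q = v1"; cases "q = v2")
    using u v h by simp_all
qed

lemma final_form:
  assumes g: "good {u1,u2} {v1,v2} r" and "card {u1,u2} = 2" "card {v1,v2} = 2"
  shows "(matr {u1,u2} {v1,v2} r :: 'x \<Rightarrow> 'x \<Rightarrow> 'a::field) = (\<lambda>p q. munit u1 v1 p q + munit u2 v2 p q)
       \<or> (matr {u1,u2} {v1,v2} r :: 'x \<Rightarrow> 'x \<Rightarrow> 'a::field) = (\<lambda>p q. munit u1 v2 p q + munit u2 v1 p q)"
proof -
  have u: "u1 \<noteq> u2" and v: "v1 \<noteq> v2" using assms(2,3) by auto
  have g1: "\<And>p. p \<in> {u1,u2} \<Longrightarrow> \<exists>!q. q \<in> {v1,v2} \<and> r p q"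
    and g2: "\<And>q. q \<in> {v1,v2} \<Longrightarrow> \<exists>!p. p \<in> {u1,u2} \<and> r p q"
    using g unfolding good_def by blast+
  have G1: "\<exists>!q. q \<in> {v1,v2} \<and> r u1 q" using g1 by simp
  have G3: "\<exists>!p. p \<in> {u1,u2} \<and> r p v1" using g2 by simp
  have G4: "\<exists>!p. p \<in> {u1,u2} \<and> r p v2" using g2 by simp
  have e1: "r u1 v1 \<or> r u1 v2" using G1 by auto
  have e3: "r u1 v1 \<or> r u2 v1" using G3 by auto
  have e4: "r u1 v2 \<or> r u2 v2" using G4 by auto
  have n1: "\<not> (r u1 v1 \<and> r u1 v2)"
  proof
    assume "r u1 v1 \<and> r u1 v2"
    then have "v1 \<in> {v1,v2} \<and> r u1 v1" "v2 \<in> {v1,v2} \<and> r u1 v2" by auto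
    then show False using G1 v by (metis (no_types, lifting) ex1E)
  qed
  have n2: "\<not> (r u1 v1 \<and> r u2 v1)"
  proof
    assume "r u1 v1 \<and> r u2 v1"
    then have "u1 \<in> {u1,u2} \<and> r u1 v1" "u2 \<in> {u1,u2} \<and> r u2 v1" by auto
    then show False using G3 u by (metis (no_types, lifting) ex1E)
  qed
  have n3: "\<not> (r u1 v2 \<and> r u2 v2)"
  proof
    assume "r u1 v2 \<and> r u2 v2"
    then have "u1 \<in> {u1,u2} \<and> r u1 v2" "u2 \<in> {u1,u2} \<and> r u2 v2" by auto
    then show False using G4 u by (metis (no_types, lifting) ex1E)
  qed
  show ?thesis
  proof (cases "r u1 v1")
    case True
    then have "\<not> r u1 v2" "r u2 v2" "\<not> r u2 v1" using n1 n2 e4 by blast+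
    then show ?thesis using matr_form1[of u1 u2 v1 v2 r, OF u v True] by blast
  next
    case False
    then have "r u1 v2" "\<not> r u2 v2" "r u2 v1" using e1 n3 e3 by blast+
    then show ?thesis using matr_form2[of u1 u2 v1 v2 r, OF u v False] by blast
  qed
qed

theorem corollary3p9:
  fixes X :: "'x set" and d :: nat and R :: "nat \<Rightarrow> ('x \<times> 'x) set"
    and x :: 'x and a :: nat and i j l :: "nat \<Rightarrow> nat" and u1 u2 v1 v2 :: 'x
  assumes "scheme X d R"
    and "x \<in> X"
    and "\<forall>b\<le>a. i b \<le> d \<and> j b \<le> d \<and> l b \<le> d"
    and "\<forall>b\<le>a. int_num X R (i b) (j b) (l b) = 1"
    and "\<forall>b\<le>a. valency X d R (i b) = 2 \<and> valency X d R (l b) = 2"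
    and "\<forall>c<a. l c = i (Suc c)"
    and "{y. (x,y) \<in> R (i 0)} = {u1, u2}"
    and "{y. (x,y) \<in> R (l a)} = {v1, v2}"
  shows "(chain_prod X R x i j l a :: 'x \<Rightarrow> 'x \<Rightarrow> 'a::field) = (\<lambda>p q. munit u1 v1 p q + munit u2 v2 p q)
       \<or> (chain_prod X R x i j l a :: 'x \<Rightarrow> 'x \<Rightarrow> 'a::field) = (\<lambda>p q. munit u1 v2 p q + munit u2 v1 p q)"
proof -
  note S = assms(1)
  have cards: "card {z. (x,z)\<in>R (i b)} = 2 \<and> card {z. (x,z)\<in>R (l b)} = 2" if "b \<le> a" for b
  proof -
    have h: "i b \<le> d" "l b \<le> d" "valency X d R (i b) = 2" "valency X d R (l b) = 2"
      using assms(3,5) that by auto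
    show ?thesis using valency_card[OF S h(1) assms(2)] valency_card[OF S h(2) assms(2)] h(3,4) by simp
  qed
  have blk: "good {z. (x,z)\<in>R (i b)} {z. (x,z)\<in>R (l b)} (\<lambda>p q. (p,q) \<in> R (j b))" if "b \<le> a" for b
  proof -
    have h: "i b \<le> d" "j b \<le> d" "l b \<le> d" "int_num X R (i b) (j b) (l b) = 1"
      using assms(3,4) that by auto
    show ?thesis using block_good[OF S assms(2) h] cards[OF that] by blast
  qed
  have main: "b \<le> a \<Longrightarrow> \<exists>r. good {z. (x,z)\<in>R (i 0)} {z. (x,z)\<in>R (l b)} r \<and>
      (chain_prod X R x i j l b :: 'x \<Rightarrow> 'x \<Rightarrow> 'a) = matr {z. (x,z)\<in>R (i 0)} {z. (x,z)\<in>R (l b)} r" for b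
  proof (induction b)
    case 0
    have h: "i 0 \<le> d" "j 0 \<le> d" "l 0 \<le> d" using assms(3) by auto
    show ?case using blk[of 0] block_matr[OF S h, of x, where 'a='a] by auto
  next
    case (Suc b)
    then obtain r where r: "good {z. (x,z)\<in>R (i 0)} {z. (x,z)\<in>R (l b)} r"
      "(chain_prod X R x i j l b :: 'x \<Rightarrow> 'x \<Rightarrow> 'a) = matr {z. (x,z)\<in>R (i 0)} {z. (x,z)\<in>R (l b)} r"
      by auto
    have li: "l b = i (Suc b)" using assms(6) Suc.prems by auto
    have bm: "mmul X (mmul X (dual_idem R x (i (Suc b))) (adj R (j (Suc b)))) (dual_idem R x (l (Suc b)))
      = (matr {z. (x,z)\<in>R (l b)} {z. (x,z)\<in>R (l (Suc b))} (\<lambda>p q. (p,q) \<in> R (j (Suc b))) :: 'x \<Rightarrow> 'x \<Rightarrow> 'a)"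
    proof -
      have h: "i (Suc b) \<le> d" "j (Suc b) \<le> d" "l (Suc b) \<le> d" using assms(3) Suc.prems by auto
      show ?thesis using block_matr[OF S h, of x, where 'a='a] li by simp
    qed
    have g2: "good {z. (x,z)\<in>R (l b)} {z. (x,z)\<in>R (l (Suc b))} (\<lambda>p q. (p,q) \<in> R (j (Suc b)))"
      using blk[OF Suc.prems] li by simp
    have sub: "{z. (x,z)\<in>R (l b)} \<subseteq> X" using scheme_sub[OF S, of "l b"] assms(3) Suc.prems by auto
    show ?case
      using good_comp[OF r(1) g2] matr_comp[OF r(1) sub sch_fin[OF S]] r(2) bm by auto
  qed
  obtain r where r: "good {u1,u2} {v1,v2} r"
      "(chain_prod X R x i j l a :: 'x \<Rightarrow> 'x \<Rightarrow> 'a) = matr {u1,u2} {v1,v2} r"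
    using main[of a] assms(7,8) by auto
  have "card {u1,u2} = 2" "card {v1,v2} = 2" using cards[of 0] cards[of a] assms(7,8) by auto
  then show ?thesis using final_form[OF r(1), where 'a='a] r(2) by simp
qed

end
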